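(* Under the hypotheses of the setting below, the functions $\Phi=\varphi\Delta^{-1}=W\{\varphi\}C^{-1}$ and $\Psi=\psi(\Delta^{-1})^\top=(W^{-1})^\tau\{\psi\}(C^\top)^{-1}$ satisfy $$\hat L_{k,l}\{\Phi\}+c_l(\hat M_n)^{l+1}\{\Phi\}=0,\qquad \hat L_{k,l}^\tau\{\Psi\}+c_l(\hat M_n^\tau)^{l+1}\{\Psi\}=0,$$ where $\hat L_{k,l}=WL_{k,l}W^{-1}$ and $\hat M_n=WM_nW^{-1}$.
   Context: $D=\partial/\partial x$. Operators are formal matrix pseudodifferential operators in $D$ whose coefficients are $N\times N$ matrix functions of $x$ and $t_n$; they may also contain $\partial_{t_n}$, which commutes with $D$. $P\{f\}$ is the action on $f$, with $D^{-1}$ a fixed $x$-antiderivative commuting with $\partial_{t_n}$. The formal transpose $P^\tau$ is the anti-automorphism with $(fD^i)^\tau=(-1)^iD^if^\top$, $\partial_{t_n}^\tau=-\partial_{t_n}$, $(PQ)^\tau=Q^\tau P^\tau$. Setting. Data: $k,n\in\mathbb N$; $l\ge0$; $c_l,\alpha_n\in\mathbb C$; $\mathcal J_k,\tilde{\mathcal J}_n$ commuting constant $N\times N$ matrices; $u_j,v_i$ are $N\times N$ matrix functions; $\mathbf q,\mathbf r$ are $N\times m$ matrix functions; $\mathcal M_0$ is a constant $m\times m$ matrix. Operators: $$M_n=\alpha_n\partial_{t_n}-\tilde{\mathcal J}_nD^n-\sum_{i=0}^{n-1}v_iD^i-\mathbf q\mathcal M_0D^{-1}\mathbf r^\top,$$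 $$L_{k,l}=\mathcal J_kD^k+\sum_{j=0}^{k-1}u_jD^j+c_l\sum_{j=0}^l\mathbf q[j]\mathcal M_0D^{-1}\mathbf r^\top[l-j],$$ with $\mathbf q[j]=M_n^j\{\mathbf q\}$ and $\mathbf r^\top[j]=((M_n^\tau)^j\{\mathbf r\})^\top$. Hypotheses: $N\times K$ matrix functions $\varphi,\psi$ satisfy $M_n\{\varphi\}=\varphi\Lambda$, $M_n^\tau\{\psi\}=\psi\tilde\Lambda$, $L_{k,l}\{\varphi\}=-c_l\varphi\Lambda^{l+1}$ and $L^\tau_{k,l}\{\psi\}=-c_l\psi\tilde\Lambda^{l+1}$, where $\Lambda,\tilde\Lambda$ are constant $K\times K$ matrices. $C$ is a constant invertible $K\times K$ matrix, $\Delta=C+D^{-1}\{\psi^\top\varphi\}$, $W=I-\varphi\Delta^{-1}D^{-1}\psi^\top$, and $W^{-1}=I+\varphi D^{-1}\Delta^{-1}\psi^\top$. *)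

theory Defs
  imports "Jordan_Normal_Form.Matrix"
begin

text \<open>The matrix functions of x and t_n are modelled by
matrices over a commutative ring of scalar functions 'a, equipped with commuting
derivations Dx (= d/dx) and Dt (= d/dt_n), a fixed antiderivative J (= D^{-1}) commuting
with Dt, and an embedding emb of complex constants.  The antiderivative is normalised like
an integral from a base point x0: the boundary term E f = f - J (Dx f) (evaluation at x0)
is additive and multiplicative.\<close>

definition diff_setting ::
  "('a::comm_ring_1 \<Rightarrow> 'a) \<Rightarrow> ('a \<Rightarrow> 'a) \<Rightarrow> ('a \<Rightarrow> 'a) \<Rightarrow> (complex \<Rightarrow> 'a) \<Rightarrow> bool" where
  "diff_setting Dx Dt J emb \<longleftrightarrow>
     (\<forall>f g. Dx (f + g) = Dx f + Dx g \<and> Dx (f * g) = Dx f * g + f * Dx g) \<and>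
     (\<forall>f g. Dt (f + g) = Dt f + Dt g \<and> Dt (f * g) = Dt f * g + f * Dt g) \<and>
     (\<forall>f. Dx (Dt f) = Dt (Dx f)) \<and>
     (\<forall>f. Dx (J f) = f) \<and>
     (\<forall>f g. J (f + g) = J f + J g) \<and>
     (\<forall>f. J (Dt f) = Dt (J f)) \<and>
     (\<forall>f g. (f - J (Dx f)) * (g - J (Dx g)) = f * g - J (Dx (f * g))) \<and>
     (\<forall>a b. emb (a + b) = emb a + emb b \<and> emb (a * b) = emb a * emb b) \<and> emb 1 = 1 \<and>
     (\<forall>a. Dx (emb a) = 0 \<and> Dt (emb a) = 0)"

text \<open>Operator expressions (formal matrix pseudodifferential operators in D, possibly
containing the t-derivative).  Coefficients are matrices of arbitrary compatible shape.\<close>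

datatype 'a opr =
    Id
  | Zero
  | Mul "'a mat"
  | Dop
  | Iop
  | Top
  | Scal 'a "'a opr"
  | Add "'a opr" "'a opr"
  | Comp "'a opr" "'a opr"

fun act :: "('a::comm_ring_1 \<Rightarrow> 'a) \<Rightarrow> ('a \<Rightarrow> 'a) \<Rightarrow> ('a \<Rightarrow> 'a) \<Rightarrow> 'a opr \<Rightarrow> 'a mat \<Rightarrow> 'a mat" where
  "act Dx Dt J Id f = f"
| "act Dx Dt J Zero f = 0\<^sub>m (dim_row f) (dim_col f)"
| "act Dx Dt J (Mul A) f = A * f"
| "act Dx Dt J Dop f = map_mat Dx f"
| "act Dx Dt J Iop f = map_mat J f"
| "act Dx Dt J Top f = map_mat Dt f"
| "act Dx Dt J (Scal c P) f = c \<cdot>\<^sub>m act Dx Dt J P f"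
| "act Dx Dt J (Add P Q) f = act Dx Dt J P f + act Dx Dt J Q f"
| "act Dx Dt J (Comp P Q) f = act Dx Dt J P (act Dx Dt J Q f)"

fun tau :: "'a::comm_ring_1 opr \<Rightarrow> 'a opr" where
  "tau Id = Id"
| "tau Zero = Zero"
| "tau (Mul A) = Mul (transpose_mat A)"
| "tau Dop = Scal (-1) Dop"
| "tau Iop = Scal (-1) Iop"
| "tau Top = Scal (-1) Top"
| "tau (Scal c P) = Scal c (tau P)"
| "tau (Add P Q) = Add (tau P) (tau Q)"
| "tau (Comp P Q) = Comp (tau Q) (tau P)"

fun opow :: "'a opr \<Rightarrow> nat \<Rightarrow> 'a opr" where
  "opow P 0 = Id"
| "opow P (Suc i) = Comp P (opow P i)"

fun osum :: "(nat \<Rightarrow> 'a opr) \<Rightarrow> nat \<Rightarrow> 'a opr" where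
  "osum F 0 = Zero"
| "osum F (Suc i) = Add (osum F i) (F i)"

definition cmat :: "(complex \<Rightarrow> 'a) \<Rightarrow> complex mat \<Rightarrow> 'a mat" where
  "cmat emb A = map_mat emb A"

definition M_op :: "(complex \<Rightarrow> 'a::comm_ring_1) \<Rightarrow> nat \<Rightarrow> complex \<Rightarrow> complex mat
    \<Rightarrow> (nat \<Rightarrow> 'a mat) \<Rightarrow> 'a mat \<Rightarrow> complex mat \<Rightarrow> 'a mat \<Rightarrow> 'a opr" where
  "M_op emb n \<alpha> Jt v q M0 r =
     Add (Scal (emb \<alpha>) Top)
       (Scal (-1) (Add (Add (Comp (Mul (cmat emb Jt)) (opow Dop n))
                            (osum (\<lambda>i. Comp (Mul (v i)) (opow Dop i)) n))
                       (Comp (Mul (q * cmat emb M0)) (Comp Iop (Mul (transpose_mat r))))))"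

definition L_op :: "('a::comm_ring_1 \<Rightarrow> 'a) \<Rightarrow> ('a \<Rightarrow> 'a) \<Rightarrow> ('a \<Rightarrow> 'a) \<Rightarrow> (complex \<Rightarrow> 'a)
    \<Rightarrow> 'a opr \<Rightarrow> nat \<Rightarrow> nat \<Rightarrow> complex \<Rightarrow> complex mat \<Rightarrow> (nat \<Rightarrow> 'a mat)
    \<Rightarrow> 'a mat \<Rightarrow> complex mat \<Rightarrow> 'a mat \<Rightarrow> 'a opr" where
  "L_op Dx Dt J emb M k l c Jk u q M0 r =
     Add (Add (Comp (Mul (cmat emb Jk)) (opow Dop k))
              (osum (\<lambda>j. Comp (Mul (u j)) (opow Dop j)) k))
         (Scal (emb c)
            (osum (\<lambda>j. Comp (Mul (act Dx Dt J (opow M j) q * cmat emb M0))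
                         (Comp Iop (Mul (transpose_mat (act Dx Dt J (opow (tau M) (l - j)) r)))))
                  (Suc l)))"

definition W_op :: "'a::comm_ring_1 mat \<Rightarrow> 'a mat \<Rightarrow> 'a mat \<Rightarrow> 'a opr" where
  "W_op \<phi> \<psi> \<Delta>i = Add Id (Scal (-1) (Comp (Mul (\<phi> * \<Delta>i)) (Comp Iop (Mul (transpose_mat \<psi>)))))"

definition Winv_op :: "'a::comm_ring_1 mat \<Rightarrow> 'a mat \<Rightarrow> 'a mat \<Rightarrow> 'a opr" where
  "Winv_op \<phi> \<psi> \<Delta>i = Add Id (Comp (Mul \<phi>) (Comp Iop (Mul (\<Delta>i * transpose_mat \<psi>))))"

definition dress :: "'a::comm_ring_1 mat \<Rightarrow> 'a mat \<Rightarrow> 'a mat \<Rightarrow> 'a opr \<Rightarrow> 'a opr" where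
  "dress \<phi> \<psi> \<Delta>i P = Comp (W_op \<phi> \<psi> \<Delta>i) (Comp P (Winv_op \<phi> \<psi> \<Delta>i))"

end

theory Submission imports Defs begin

inductive wfo :: "'a::comm_ring_1 opr \<Rightarrow> nat \<Rightarrow> nat \<Rightarrow> bool" where
  "wfo Id r r"
| "wfo Zero r r"
| "dim_col A = r \<Longrightarrow> wfo (Mul A) r (dim_row A)"
| "wfo Dop r r"
| "wfo Iop r r"
| "wfo Top r r"
| "wfo P r s \<Longrightarrow> wfo (Scal c P) r s"
| "wfo P r s \<Longrightarrow> wfo Q r s \<Longrightarrow> wfo (Add P Q) r s"
| "wfo Q r s \<Longrightarrow> wfo P s t \<Longrightarrow> wfo (Comp P Q) r t"

lemma wfo_Mul: "A \<in> carrier_mat s r \<Longrightarrow> wfo (Mul A) r s"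
  using wfo.intros(3)[of A r] by auto

lemma wfo_tau: "wfo P r s \<Longrightarrow> wfo (tau P) s r"
  by (induction rule: wfo.induct) (auto intro: wfo.intros wfo_Mul)

lemma wfo_opow: "wfo P r r \<Longrightarrow> wfo (opow P j) r r"
  by (induction j) (auto intro: wfo.intros)

lemma wfo_osum: "(\<And>i. i < n \<Longrightarrow> wfo (F i) r r) \<Longrightarrow> wfo (osum F n) r r"
  by (induction n) (auto intro: wfo.intros)

lemma act_carrier: "wfo P r s \<Longrightarrow> f \<in> carrier_mat r c \<Longrightarrow> act Dx Dt J P f \<in> carrier_mat s c"
  by (induction P r s arbitrary: f rule: wfo.induct) auto

locale dset =
  fixes Dx Dt J :: "'a::comm_ring_1 \<Rightarrow> 'a" and emb :: "complex \<Rightarrow> 'a"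
  assumes ds: "diff_setting Dx Dt J emb"
begin

lemma Dx_add: "Dx (f+g) = Dx f + Dx g" and Dx_mult: "Dx (f*g) = Dx f * g + f * Dx g"
  and Dt_add: "Dt (f+g) = Dt f + Dt g" and Dt_mult: "Dt (f*g) = Dt f * g + f * Dt g"
  and DxJ: "Dx (J f) = f" and J_add: "J (f+g) = J f + J g"
  and Emult: "(f - J (Dx f)) * (g - J (Dx g)) = f * g - J (Dx (f * g))"
  and emb_add: "emb (a+b) = emb a + emb b" and emb_mult: "emb (a*b) = emb a * emb b"
  and emb_one: "emb 1 = 1" and Dx_emb: "Dx (emb a) = 0" and Dt_emb: "Dt (emb a) = 0"
  using ds unfolding diff_setting_def by auto

lemma Dx_hom: "ab_group_add_hom Dx"
proof
  have "Dx 0 = Dx 0 + Dx 0" using Dx_add[of 0 0] by simp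
  then show "Dx 0 = 0" by simp
qed (rule Dx_add)

lemma Dt_hom: "ab_group_add_hom Dt"
proof
  have "Dt 0 = Dt 0 + Dt 0" using Dt_add[of 0 0] by simp
  then show "Dt 0 = 0" by simp
qed (rule Dt_add)

lemma J_hom: "ab_group_add_hom J"
proof
  have "J 0 = J 0 + J 0" using J_add[of 0 0] by simp
  then show "J 0 = 0" by simp
qed (rule J_add)

end

sublocale dset \<subseteq> dxh: ab_group_add_hom Dx by (rule Dx_hom)
sublocale dset \<subseteq> dth: ab_group_add_hom Dt by (rule Dt_hom)
sublocale dset \<subseteq> jh: ab_group_add_hom J by (rule J_hom)

context dset begin

lemma J0[simp]: "J 0 = 0" and Dx0[simp]: "Dx 0 = 0" and Dt0[simp]: "Dt 0 = 0"
  by auto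

lemma Dx_minus: "Dx (a - b) = Dx a - Dx b" and J_minus: "J (a - b) = J a - J b"
  and Dx_uminus: "Dx (- a) = - Dx a" and J_uminus: "J (- a) = - J a"
  by (auto simp: dxh.hom_minus jh.hom_minus dxh.hom_uminus jh.hom_uminus)

lemma Dx1[simp]: "Dx 1 = 0"
proof -
  have "Dx 1 = Dx 1 + Dx 1" using Dx_mult[of 1 1] by simp
  then show ?thesis by simp
qed

definition E where "E f = f - J (Dx f)"

lemma E_hom: "Ring_Hom.ring_hom E"
proof
  show "E 0 = 0" by (simp add: E_def)
  show "E 1 = 1" by (simp add: E_def)
  show "E (x + y) = E x + E y" for x y by (simp add: E_def Dx_add J_add)
  show "E (x * y) = E x * E y" for x y by (simp add: E_def Emult)
qed

lemma emb_hom: "Ring_Hom.ring_hom emb"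
proof
  have "emb 0 = emb 0 + emb 0" using emb_add[of 0 0] by simp
  then show "emb 0 = 0" by simp
qed (auto simp: emb_add emb_mult emb_one)

lemma E_shom: "semiring_hom E"
proof
  show "E 0 = 0" by (simp add: E_def)
  show "E 1 = 1" by (simp add: E_def)
  show "E (x + y) = E x + E y" for x y by (simp add: E_def Dx_add J_add)
  show "E (x * y) = E x * E y" for x y by (simp add: E_def Emult)
qed
lemma emb_shom: "semiring_hom emb"
proof
  have "emb 0 = emb 0 + emb 0" using emb_add[of 0 0] by simp
  then show "emb 0 = 0" by simp
qed (auto simp: emb_add emb_mult emb_one)
lemma emb0[simp]: "emb 0 = 0"
  using semiring_hom.axioms(1)[OF emb_shom] by (simp add: comm_monoid_add_hom_def monoid_add_hom_def zero_hom_def)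

lemma E_J[simp]: "E (J x) = 0" by (simp add: E_def DxJ)

lemma E_emb[simp]: "E (emb x) = emb x" by (simp add: E_def Dx_emb)

lemma J_lin: assumes "Dx h = 0" shows "J (h * f) = h * J f"
proof -
  define g where "g = J (h * f) - h * J f"
  have "Dx g = 0" by (simp add: g_def Dx_minus DxJ Dx_mult assms)
  have e1: "E g = E (J (h * f)) - E (h * J f)"
    unfolding g_def E_def by (simp add: Dx_minus J_minus)
  have e2: "E (h * J f) = E h * E (J f)" unfolding E_def by (simp add: Emult)
  have "E g = E (J (h * f)) - E h * E (J f)" using e1 e2 by simp
  then have "E g = 0" by simp
  then have "g = 0" using \<open>Dx g = 0\<close> by (simp add: E_def)
  then show ?thesis by (simp add: g_def)
qed

lemma add_hom_sum: assumes h: "ab_group_add_hom h" shows "h (sum g A) = (\<Sum>x\<in>A. h (g x))"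
proof -
  interpret ab_group_add_hom h by (rule h)
  show ?thesis by (rule hom_sum)
qed

lemma J_emb_right: "J (a * emb x) = J a * emb x"
  using J_lin[of "emb x" a] by (simp add: Dx_emb mult.commute)

lemma map_mat_right:
  assumes h: "ab_group_add_hom h" and hl: "\<And>a x. h (a * emb x) = h a * emb x"
    and f: "f \<in> carrier_mat r c" and Y: "Y \<in> carrier_mat c d"
  shows "map_mat h (f * map_mat emb Y) = map_mat h f * map_mat emb Y"
proof (rule eq_matI)
  fix i j assume ij: "i < dim_row (map_mat h f * map_mat emb Y)" "j < dim_col (map_mat h f * map_mat emb Y)"
  then have i: "i < r" and j: "j < d" using f Y by auto
  show "map_mat h (f * map_mat emb Y) $$ (i, j) = (map_mat h f * map_mat emb Y) $$ (i, j)"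
    using i j f Y by (simp add: scalar_prod_def add_hom_sum[OF h] hl)
qed (use f Y in auto)

lemma act_right:
  "wfo P r s \<Longrightarrow> f \<in> carrier_mat r c \<Longrightarrow> Y \<in> carrier_mat c d \<Longrightarrow>
   act Dx Dt J P (f * map_mat emb Y) = act Dx Dt J P f * map_mat emb Y"
proof (induction P r s arbitrary: f rule: wfo.induct)
  case (3 A r)
  then show ?case by simp (rule assoc_mult_mat[symmetric], auto)
next
  case (4 r)
  then show ?case by (auto intro!: map_mat_right Dx_hom simp: Dx_mult Dx_emb)
next
  case (5 r)
  then show ?case by (auto intro!: map_mat_right J_hom simp: J_emb_right)
next
  case (6 r)
  then show ?case by (auto intro!: map_mat_right Dt_hom simp: Dt_mult Dt_emb)
next
  case (7 P r s a)
  then show ?case using act_carrier[OF 7(1), of f] by (auto simp: mult_smult_assoc_mat[of _ s c])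
next
  case (8 P r s Q)
  then show ?case using act_carrier[OF 8(1), of f] act_carrier[OF 8(2), of f]
    by (auto simp: add_mult_distrib_mat[of _ s c])
next
  case (9 Q r s P t)
  then show ?case using act_carrier[OF 9(1), of f] by auto
qed auto

lemma Dx_mat_mult: assumes A: "A \<in> carrier_mat n k" and B: "B \<in> carrier_mat k m"
  shows "map_mat Dx (A * B) = map_mat Dx A * B + A * map_mat Dx B"
  by (rule eq_matI) (use A B in \<open>auto simp: scalar_prod_def add_hom_sum[OF Dx_hom] Dx_mult sum.distrib\<close>)

lemma E_add: "E (a + b) = E a + E b" by (simp add: E_def Dx_add J_add)

lemma emb_uminus: "emb (- a) = - emb a"
proof -
  have "emb (- a) + emb a = 0" using emb_add[of "-a" a] by simp
  then show ?thesis by (simp add: eq_neg_iff_add_eq_0)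
qed

end

lemma mat_cancel1: assumes "a = b + c" "a \<in> carrier_mat n m" "b \<in> carrier_mat n m" "c \<in> carrier_mat n m"
  shows "a + (-1) \<cdot>\<^sub>m c = (b :: 'a :: comm_ring_1 mat)"
  by (rule eq_matI) (use assms in auto)

lemma mat_cancel2: assumes "a \<in> carrier_mat n m" "b \<in> carrier_mat n m"
  shows "a + (b - a) = (b :: 'a :: comm_ring_1 mat)"
  by (rule eq_matI) (use assms in auto)

lemma add_eq0: assumes e: "a + b = 0\<^sub>m n m" and a: "a \<in> carrier_mat n m" and b: "b \<in> carrier_mat n m"
  shows "b = - (a :: 'a :: comm_ring_1 mat)"
proof (rule eq_matI)
  fix i j assume "i < dim_row (- a)" "j < dim_col (- a)"
  then have ij: "i < n" "j < m" using a by auto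
  have "(a + b) $$ (i,j) = 0" using e ij by simp
  then have "a $$ (i,j) + b $$ (i,j) = 0" using ij a b by simp
  then show "b $$ (i, j) = (- a) $$ (i, j)" using ij a by (simp add: eq_neg_iff_add_eq_0 add.commute)
qed (use a b in auto)

lemma pow_Suc_left: assumes A: "A \<in> carrier_mat n n" shows "A ^\<^sub>m Suc j = A * A ^\<^sub>m j"
proof (induction j)
  case 0 then show ?case using A by simp
next
  case (Suc j)
  have "A ^\<^sub>m Suc (Suc j) = (A * A ^\<^sub>m j) * A" using Suc by simp
  also have "\<dots> = A * (A ^\<^sub>m j * A)" using A by (rule_tac assoc_mult_mat[of _ n n]) auto
  finally show ?case by simp
qed

lemma assoc_dim: "dim_col A = dim_row B \<Longrightarrow> dim_col B = dim_row C \<Longrightarrow> A * B * C = A * (B * (C :: 'a :: semiring_0 mat))"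
  by (rule assoc_mult_mat[of A "dim_row A" "dim_col A" B _ C "dim_col C"]) auto

lemma transpose_mult_dim: "dim_col A = dim_row B \<Longrightarrow> transpose_mat (A * B) = transpose_mat B * transpose_mat (A :: 'a :: comm_semiring_0 mat)"
  by (rule transpose_mult[of A "dim_row A" "dim_col A" B "dim_col B"]) auto

context dset begin

lemma neg_smult_map: "map_mat emb (- (c \<cdot>\<^sub>m A)) = - (emb c \<cdot>\<^sub>m map_mat emb A)"
  by (rule eq_matI) (auto simp: emb_mult emb_uminus)

lemma final_comb: assumes F: "F \<in> carrier_mat n K" and W0: "W0 \<in> carrier_mat K K"
  shows "F * map_mat emb (- (c \<cdot>\<^sub>m W0)) + emb c \<cdot>\<^sub>m (F * map_mat emb W0) = 0\<^sub>m n K"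
proof -
  have "F * map_mat emb (- (c \<cdot>\<^sub>m W0)) = - (emb c \<cdot>\<^sub>m (F * map_mat emb W0))"
    unfolding neg_smult_map uminus_mult_right_mat using F W0 by (simp add: mult_smult_distrib[of _ n K])
  then show ?thesis using F W0 by simp
qed

lemma pow_act: assumes P: "wfo P n n" and F: "F \<in> carrier_mat n K" and Z: "Z \<in> carrier_mat K K"
  and e: "act Dx Dt J P F = F * map_mat emb Z"
  shows "act Dx Dt J (opow P j) F = F * map_mat emb (Z ^\<^sub>m j)"
proof (induction j)
  case 0
  then show ?case using F Z by (simp add: semiring_hom.mat_hom_one[OF emb_shom])
next
  case (Suc j)
  have "act Dx Dt J (opow P (Suc j)) F = act Dx Dt J P (F * map_mat emb (Z ^\<^sub>m j))"
    using Suc by simp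
  also have "\<dots> = F * map_mat emb Z * map_mat emb (Z ^\<^sub>m j)"
    using act_right[OF P F, of "Z ^\<^sub>m j" K] Z e by simp
  also have "\<dots> = F * (map_mat emb Z * map_mat emb (Z ^\<^sub>m j))"
    using F Z by (rule_tac assoc_mult_mat[of _ n K _ K _ K]) auto
  also have "map_mat emb Z * map_mat emb (Z ^\<^sub>m j) = map_mat emb (Z ^\<^sub>m Suc j)"
    using Z by (subst pow_Suc_left[OF Z], rule semiring_hom.mat_hom_mult[OF emb_shom, symmetric, of Z K K _ K]) auto
  finally show ?case .
qed

end

lemma wfo_MIM: "A \<in> carrier_mat t s \<Longrightarrow> B \<in> carrier_mat s r \<Longrightarrow> wfo (Comp (Mul A) (Comp Iop (Mul B))) r t"
  by (rule wfo.intros(9)[OF wfo.intros(9)[OF wfo_Mul wfo.intros(5)] wfo_Mul])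

lemma wfo_MD: "A \<in> carrier_mat r r \<Longrightarrow> wfo (Comp (Mul A) (opow Dop i)) r r"
  by (rule wfo.intros(9)[OF wfo_opow[OF wfo.intros(4)] wfo_Mul])

lemma smult_m1_m1: "(-1) \<cdot>\<^sub>m ((-1) \<cdot>\<^sub>m Z) = (Z :: 'a :: comm_ring_1 mat)"
  by (rule eq_matI) auto

theorem corollary4:
  fixes Dx Dt J :: "'a::comm_ring_1 \<Rightarrow> 'a" and emb :: "complex \<Rightarrow> 'a"
    and k n l N m K :: nat and c \<alpha> :: complex
    and Jk Jt M0 \<Lambda> \<Lambda>t C Ci :: "complex mat"
    and u v :: "nat \<Rightarrow> 'a mat" and q r \<phi> \<psi> \<Delta>i :: "'a mat"
  defines "M \<equiv> M_op emb n \<alpha> Jt v q M0 r"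
  defines "L \<equiv> L_op Dx Dt J emb M k l c Jk u q M0 r"
  defines "\<Delta> \<equiv> cmat emb C + map_mat J (transpose_mat \<psi> * \<phi>)"
  defines "W \<equiv> W_op \<phi> \<psi> \<Delta>i" and "Winv \<equiv> Winv_op \<phi> \<psi> \<Delta>i"
  defines "\<Phi> \<equiv> \<phi> * \<Delta>i" and "\<Psi> \<equiv> \<psi> * transpose_mat \<Delta>i"
  assumes setting: "diff_setting Dx Dt J emb"
    and Jk: "Jk \<in> carrier_mat N N" and Jt: "Jt \<in> carrier_mat N N" and comm: "Jk * Jt = Jt * Jk"
    and u: "\<And>j. j < k \<Longrightarrow> u j \<in> carrier_mat N N"
    and v: "\<And>i. i < n \<Longrightarrow> v i \<in> carrier_mat N N"
    and q: "q \<in> carrier_mat N m" and r: "r \<in> carrier_mat N m" and M0: "M0 \<in> carrier_mat m m"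
    and \<phi>: "\<phi> \<in> carrier_mat N K" and \<psi>: "\<psi> \<in> carrier_mat N K"
    and \<Lambda>: "\<Lambda> \<in> carrier_mat K K" and \<Lambda>t: "\<Lambda>t \<in> carrier_mat K K"
    and C: "C \<in> carrier_mat K K" and Ci: "Ci \<in> carrier_mat K K"
    and C_inv: "C * Ci = 1\<^sub>m K" "Ci * C = 1\<^sub>m K"
    and \<Delta>i: "\<Delta>i \<in> carrier_mat K K" and \<Delta>_inv: "\<Delta> * \<Delta>i = 1\<^sub>m K" "\<Delta>i * \<Delta> = 1\<^sub>m K"
    and M_phi: "act Dx Dt J M \<phi> = \<phi> * cmat emb \<Lambda>"
    and Mt_psi: "act Dx Dt J (tau M) \<psi> = \<psi> * cmat emb \<Lambda>t"
    and L_phi: "act Dx Dt J L \<phi> = - (emb c \<cdot>\<^sub>m (\<phi> * cmat emb (\<Lambda> ^\<^sub>m Suc l)))"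
    and Lt_psi: "act Dx Dt J (tau L) \<psi> = - (emb c \<cdot>\<^sub>m (\<psi> * cmat emb (\<Lambda>t ^\<^sub>m Suc l)))"
  shows "\<Phi> = act Dx Dt J W \<phi> * cmat emb Ci
    \<and> \<Psi> = act Dx Dt J (tau Winv) \<psi> * cmat emb (transpose_mat Ci)
    \<and> act Dx Dt J (dress \<phi> \<psi> \<Delta>i L) \<Phi>
           + act Dx Dt J (Scal (emb c) (opow (dress \<phi> \<psi> \<Delta>i M) (Suc l))) \<Phi> = 0\<^sub>m N K
    \<and> act Dx Dt J (tau (dress \<phi> \<psi> \<Delta>i L)) \<Psi>
           + act Dx Dt J (Scal (emb c) (opow (tau (dress \<phi> \<psi> \<Delta>i M)) (Suc l))) \<Psi> = 0\<^sub>m N K"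
proof -
  interpret dset Dx Dt J emb by (rule dset.intro[OF setting])
  note hm = semiring_hom.mat_hom_mult[OF emb_shom]
  note h1 = semiring_hom.mat_hom_one[OF emb_shom]
  define C' where "C' = map_mat emb C"
  define Ci' where "Ci' = map_mat emb Ci"
  define X where "X = map_mat J (transpose_mat \<psi> * \<phi>)"
  have C'c: "C' \<in> carrier_mat K K" "Ci' \<in> carrier_mat K K" using C Ci by (auto simp: C'_def Ci'_def)
  have Xc: "X \<in> carrier_mat K K" using \<phi> \<psi> by (auto simp: X_def)
  have \<Delta>c: "\<Delta> \<in> carrier_mat K K" using C Xc by (auto simp: \<Delta>_def cmat_def X_def)
  have \<Delta>CX: "\<Delta> = C' + X" by (simp add: \<Delta>_def cmat_def C'_def X_def)
  have CCi: "C' * Ci' = 1\<^sub>m K" "Ci' * C' = 1\<^sub>m K"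
    using hm[OF C Ci] hm[OF Ci C] C_inv h1[of K] by (auto simp: C'_def Ci'_def)
  have \<Phi>c: "\<Phi> \<in> carrier_mat N K" using \<phi> \<Delta>i by (simp add: \<Phi>_def)
  have \<Psi>c: "\<Psi> \<in> carrier_mat N K" using \<psi> \<Delta>i by (simp add: \<Psi>_def)
  have D\<Delta>: "map_mat Dx \<Delta> = transpose_mat \<psi> * \<phi>"
    by (rule eq_matI) (use C \<phi> \<psi> in \<open>auto simp: \<Delta>_def cmat_def Dx_add DxJ Dx_emb\<close>)
  have D1: "map_mat Dx (\<Delta> * \<Delta>i) = 0\<^sub>m K K"
    unfolding \<Delta>_inv(1) by (rule eq_matI) auto
  have "map_mat Dx \<Delta> * \<Delta>i + \<Delta> * map_mat Dx \<Delta>i = 0\<^sub>m K K"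
    using Dx_mat_mult[OF \<Delta>c \<Delta>i] D1 by simp
  then have "\<Delta>i * (map_mat Dx \<Delta> * \<Delta>i + \<Delta> * map_mat Dx \<Delta>i) = 0\<^sub>m K K"
    using \<Delta>i by simp
  moreover have "\<Delta>i * (map_mat Dx \<Delta> * \<Delta>i + \<Delta> * map_mat Dx \<Delta>i)
      = \<Delta>i * (map_mat Dx \<Delta> * \<Delta>i) + map_mat Dx \<Delta>i"
  proof -
    have "\<Delta>i * (map_mat Dx \<Delta> * \<Delta>i + \<Delta> * map_mat Dx \<Delta>i)
      = \<Delta>i * (map_mat Dx \<Delta> * \<Delta>i) + \<Delta>i * (\<Delta> * map_mat Dx \<Delta>i)"
      using \<Delta>i \<Delta>c by (rule_tac mult_add_distrib_mat[of _ K K]) auto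
    also have "\<Delta>i * (\<Delta> * map_mat Dx \<Delta>i) = (\<Delta>i * \<Delta>) * map_mat Dx \<Delta>i"
      using \<Delta>i \<Delta>c by (rule_tac assoc_mult_mat[symmetric, of _ K K _ K _ K]) auto
    finally show ?thesis using \<Delta>_inv(2) \<Delta>i by simp
  qed
  ultimately have dd: "map_mat Dx \<Delta>i = - (\<Delta>i * (map_mat Dx \<Delta> * \<Delta>i))"
    using \<Delta>i \<Delta>c by (rule_tac add_eq0[of _ _ K K]) auto
  have E\<Delta>: "map_mat E \<Delta> = C'"
    by (rule eq_matI) (use C \<phi> \<psi> in \<open>auto simp: \<Delta>_def cmat_def C'_def E_add\<close>)
  have "map_mat E \<Delta> * map_mat E \<Delta>i = 1\<^sub>m K"
    using semiring_hom.mat_hom_mult[OF E_shom \<Delta>c \<Delta>i] \<Delta>_inv(1) semiring_hom.mat_hom_one[OF E_shom]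
    by simp
  then have CE: "C' * map_mat E \<Delta>i = 1\<^sub>m K" using E\<Delta> by simp
  have E\<Delta>i: "map_mat E \<Delta>i = Ci'"
  proof -
    have "Ci' = Ci' * (C' * map_mat E \<Delta>i)" using CE C'c by simp
    also have "\<dots> = (Ci' * C') * map_mat E \<Delta>i"
      using C'c \<Delta>i by (rule_tac assoc_mult_mat[symmetric, of _ K K _ K _ K]) auto
    finally show ?thesis using CCi \<Delta>i by simp
  qed
  have key: "map_mat J (\<Delta>i * transpose_mat \<psi> * \<phi> * \<Delta>i) = Ci' - \<Delta>i"
  proof -
    have "\<Delta>i * transpose_mat \<psi> * \<phi> * \<Delta>i = - map_mat Dx \<Delta>i"
      unfolding dd D\<Delta> using \<Delta>i \<phi> \<psi> by (simp add: assoc_dim)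
    then have "map_mat J (\<Delta>i * transpose_mat \<psi> * \<phi> * \<Delta>i) = map_mat J (- map_mat Dx \<Delta>i)"
      by simp
    also have "\<dots> = Ci' - \<Delta>i"
    proof (rule eq_matI)
      fix i j assume ij: "i < dim_row (Ci' - \<Delta>i)" "j < dim_col (Ci' - \<Delta>i)"
      then have ij': "i < K" "j < K" using \<Delta>i by auto
      have "map_mat E \<Delta>i $$ (i,j) = Ci' $$ (i,j)" using E\<Delta>i by simp
      then have "E (\<Delta>i $$ (i,j)) = Ci' $$ (i,j)" using ij' \<Delta>i by simp
      then have h: "Ci' $$ (i,j) = \<Delta>i $$ (i,j) - J (Dx (\<Delta>i $$ (i,j)))" by (simp add: E_def)
      show "map_mat J (- map_mat Dx \<Delta>i) $$ (i, j) = (Ci' - \<Delta>i) $$ (i, j)"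
        using ij' \<Delta>i C'c by (simp add: h J_uminus)
    qed (use \<Delta>i C'c in auto)
    finally show ?thesis .
  qed
  have W1: "act Dx Dt J W \<phi> = \<Phi> * C'"
  proof -
    have a: "act Dx Dt J W \<phi> = \<phi> + (-1) \<cdot>\<^sub>m (\<Phi> * X)" by (simp add: W_def W_op_def X_def \<Phi>_def)
    have "\<phi> = \<phi> * (\<Delta>i * \<Delta>)" using \<Delta>_inv(2) \<phi> by simp
    also have "\<dots> = \<Phi> * \<Delta>" using \<phi> \<Delta>i \<Delta>c by (simp add: \<Phi>_def assoc_dim)
    also have "\<dots> = \<Phi> * C' + \<Phi> * X" unfolding \<Delta>CX using \<Phi>c C'c Xc
      by (simp add: mult_add_distrib_mat[of _ N K])
    finally have "\<phi> = \<Phi> * C' + \<Phi> * X" .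
    then show ?thesis unfolding a using \<phi> \<Phi>c C'c Xc by (rule_tac mat_cancel1[of _ _ _ N K]) auto
  qed
  have W2: "act Dx Dt J Winv \<Phi> = \<phi> * Ci'"
  proof -
    have e: "\<Delta>i * transpose_mat \<psi> * \<Phi> = \<Delta>i * transpose_mat \<psi> * \<phi> * \<Delta>i"
      using \<phi> \<psi> \<Delta>i by (simp add: \<Phi>_def assoc_dim)
    have a: "act Dx Dt J Winv \<Phi> = \<Phi> + \<phi> * map_mat J (\<Delta>i * transpose_mat \<psi> * \<Phi>)"
      by (simp add: Winv_def Winv_op_def)
    then have "act Dx Dt J Winv \<Phi> = \<Phi> + \<phi> * (Ci' - \<Delta>i)" unfolding e key .
    also have "\<phi> * (Ci' - \<Delta>i) = \<phi> * Ci' - \<Phi>" using \<phi> C'c \<Delta>i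
      by (simp add: mult_minus_distrib_mat[of _ N K] \<Phi>_def)
    also have "\<Phi> + (\<phi> * Ci' - \<Phi>) = \<phi> * Ci'" using \<Phi>c \<phi> C'c by (rule_tac mat_cancel2) auto
    finally show ?thesis .
  qed
  have T1: "act Dx Dt J (tau W) \<Psi> = \<psi> * transpose_mat Ci'"
  proof -
    have a: "act Dx Dt J (tau W) \<Psi> = \<Psi> + (-1) \<cdot>\<^sub>m (\<psi> * ((-1) \<cdot>\<^sub>m map_mat J (transpose_mat (\<phi> * \<Delta>i) * \<Psi>)))"
      by (simp add: W_def W_op_def)
    have e: "transpose_mat (\<phi> * \<Delta>i) * \<Psi> = transpose_mat (\<Delta>i * transpose_mat \<psi> * \<phi> * \<Delta>i)"
      using \<phi> \<psi> \<Delta>i by (simp add: \<Psi>_def transpose_mult_dim assoc_dim)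
    have j: "map_mat J (transpose_mat (\<phi> * \<Delta>i) * \<Psi>) = transpose_mat Ci' - transpose_mat \<Delta>i"
      unfolding e map_mat_transpose[symmetric] key using C'c \<Delta>i by (simp add: transpose_minus[of _ K K])
    have "act Dx Dt J (tau W) \<Psi> = \<Psi> + \<psi> * (transpose_mat Ci' - transpose_mat \<Delta>i)"
    proof -
      have Yc: "transpose_mat Ci' - transpose_mat \<Delta>i \<in> carrier_mat K K" using C'c \<Delta>i by auto
      show ?thesis unfolding a j mult_smult_distrib[OF \<psi> Yc] smult_m1_m1 ..
    qed
    also have "\<psi> * (transpose_mat Ci' - transpose_mat \<Delta>i) = \<psi> * transpose_mat Ci' - \<Psi>"
      using \<psi> C'c \<Delta>i by (simp add: mult_minus_distrib_mat[of _ N K] \<Psi>_def)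
    also have "\<Psi> + (\<psi> * transpose_mat Ci' - \<Psi>) = \<psi> * transpose_mat Ci'"
      using \<Psi>c \<psi> C'c by (rule_tac mat_cancel2) auto
    finally show ?thesis .
  qed
  have T2: "act Dx Dt J (tau Winv) \<psi> = \<Psi> * transpose_mat C'"
  proof -
    have a: "act Dx Dt J (tau Winv) \<psi> = \<psi> + transpose_mat (\<Delta>i * transpose_mat \<psi>) * ((-1) \<cdot>\<^sub>m map_mat J (transpose_mat \<phi> * \<psi>))"
      by (simp add: Winv_def Winv_op_def)
    have t1: "transpose_mat (\<Delta>i * transpose_mat \<psi>) = \<Psi>"
      using \<psi> \<Delta>i by (simp add: \<Psi>_def transpose_mult_dim)
    have t2: "map_mat J (transpose_mat \<phi> * \<psi>) = transpose_mat X"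
      using \<psi> \<phi> by (simp add: X_def transpose_mult_dim map_mat_transpose)
    have a2: "act Dx Dt J (tau Winv) \<psi> = \<psi> + (-1) \<cdot>\<^sub>m (\<Psi> * transpose_mat X)"
      unfolding a t1 t2 using \<Psi>c Xc by (simp add: mult_smult_distrib[of _ N K])
    have "\<psi> = \<psi> * transpose_mat (\<Delta> * \<Delta>i)" using \<Delta>_inv(1) \<psi> by simp
    also have "\<dots> = \<Psi> * transpose_mat \<Delta>" using \<psi> \<Delta>i \<Delta>c
      by (simp add: \<Psi>_def assoc_dim transpose_mult_dim)
    also have "\<dots> = \<Psi> * transpose_mat C' + \<Psi> * transpose_mat X" unfolding \<Delta>CX using \<Psi>c C'c Xc
      by (simp add: mult_add_distrib_mat[of _ N K] transpose_add[of _ K K])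
    finally have "\<psi> = \<Psi> * transpose_mat C' + \<Psi> * transpose_mat X" .
    then show ?thesis unfolding a2 using \<psi> \<Psi>c C'c Xc by (rule_tac mat_cancel1[of _ _ _ N K]) auto
  qed
  have claim1: "\<Phi> = act Dx Dt J W \<phi> * cmat emb Ci"
    unfolding W1 cmat_def Ci'_def[symmetric] using \<Phi>c C'c CCi by (simp add: assoc_dim)
  have claim2: "\<Psi> = act Dx Dt J (tau Winv) \<psi> * cmat emb (transpose_mat Ci)"
  proof -
    have "transpose_mat C' * transpose_mat Ci' = 1\<^sub>m K"
      using CCi C'c by (simp add: transpose_mult_dim[symmetric])
    then show ?thesis
      unfolding T2 cmat_def map_mat_transpose[symmetric] Ci'_def[symmetric] using \<Psi>c C'c
      by (simp add: assoc_dim)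
  qed
  have wfM: "wfo M N N"
  proof -
    have 1: "wfo (Comp (Mul (q * cmat emb M0)) (Comp Iop (Mul (transpose_mat r)))) N N"
      by (rule wfo_MIM[of _ N m]) (use q r M0 in \<open>auto simp: cmat_def\<close>)
    have 2: "wfo (Comp (Mul (cmat emb Jt)) (opow Dop n)) N N"
      by (rule wfo_MD) (use Jt in \<open>auto simp: cmat_def\<close>)
    have 3: "wfo (osum (\<lambda>i. Comp (Mul (v i)) (opow Dop i)) n) N N"
      by (rule wfo_osum, rule wfo_MD, rule v)
    show ?thesis unfolding M_def M_op_def by (intro wfo.intros(6,7,8) 1 2 3)
  qed
  have wfL: "wfo L N N"
  proof -
    have 1: "wfo (osum (\<lambda>j. Comp (Mul (act Dx Dt J (opow M j) q * cmat emb M0))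
                         (Comp Iop (Mul (transpose_mat (act Dx Dt J (opow (tau M) (l - j)) r)))))
                  (Suc l)) N N"
      by (rule wfo_osum, rule wfo_MIM[of _ N m])
        (use act_carrier[OF wfo_opow[OF wfM] q, of Dx Dt J] act_carrier[OF wfo_opow[OF wfo_tau[OF wfM]] r, of Dx Dt J] M0
          in \<open>auto intro!: mult_carrier_mat simp: cmat_def\<close>)
    have 2: "wfo (Comp (Mul (cmat emb Jk)) (opow Dop k)) N N"
      by (rule wfo_MD) (use Jk in \<open>auto simp: cmat_def\<close>)
    have 3: "wfo (osum (\<lambda>j. Comp (Mul (u j)) (opow Dop j)) k) N N"
      by (rule wfo_osum, rule wfo_MD, rule u)
    show ?thesis unfolding L_def L_op_def by (intro wfo.intros(7,8) 1 2 3)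
  qed
  have wfW: "wfo W N N" unfolding W_def W_op_def
    by (intro wfo.intros(1,7,8) wfo_MIM[of _ N K]) (use \<phi> \<psi> \<Delta>i in auto)
  have wfWi: "wfo Winv N N" unfolding Winv_def Winv_op_def
    by (intro wfo.intros(1,7,8) wfo_MIM[of _ N K]) (use \<phi> \<psi> \<Delta>i in auto)
  have wfd: "wfo (dress \<phi> \<psi> \<Delta>i P) N N" if "wfo P N N" for P
    unfolding dress_def W_def[symmetric] Winv_def[symmetric]
    by (rule wfo.intros(9)[OF wfo.intros(9)[OF wfWi that] wfW])
  have DP: "act Dx Dt J (dress \<phi> \<psi> \<Delta>i P) \<Phi> = \<Phi> * map_mat emb (C * Y0 * Ci)"
    if P: "wfo P N N" and e: "act Dx Dt J P \<phi> = \<phi> * map_mat emb Y0" and Y0: "Y0 \<in> carrier_mat K K"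
    for P Y0
  proof -
    have s1: "act Dx Dt J (dress \<phi> \<psi> \<Delta>i P) \<Phi> = act Dx Dt J W (act Dx Dt J P (act Dx Dt J Winv \<Phi>))"
      by (simp add: dress_def W_def Winv_def)
    have s2: "act Dx Dt J Winv \<Phi> = \<phi> * map_mat emb Ci" using W2 by (simp add: Ci'_def)
    have s3: "act Dx Dt J P (\<phi> * map_mat emb Ci) = \<phi> * map_mat emb (Y0 * Ci)"
      using act_right[OF P \<phi> Ci] e hm[OF Y0 Ci] \<phi> Y0 Ci by (simp add: assoc_dim)
    have s4: "act Dx Dt J W (\<phi> * map_mat emb (Y0 * Ci)) = act Dx Dt J W \<phi> * map_mat emb (Y0 * Ci)"
      by (rule act_right[OF wfW \<phi>]) (use Y0 Ci in auto)
    have s5: "act Dx Dt J W \<phi> * map_mat emb (Y0 * Ci) = \<Phi> * map_mat emb (C * Y0 * Ci)"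
      unfolding W1 C'_def using hm[OF C, of "Y0 * Ci" K] hm[OF Y0 Ci] \<Phi>c C Y0 Ci
      by (simp add: assoc_dim)
    show ?thesis unfolding s1 s2 s3 s4 s5 ..
  qed
  have DPt: "act Dx Dt J (tau (dress \<phi> \<psi> \<Delta>i P)) \<Psi> = \<Psi> * map_mat emb (transpose_mat C * Y0 * transpose_mat Ci)"
    if P: "wfo P N N" and e: "act Dx Dt J (tau P) \<psi> = \<psi> * map_mat emb Y0" and Y0: "Y0 \<in> carrier_mat K K"
    for P Y0
  proof -
    have Cit: "transpose_mat Ci \<in> carrier_mat K K" "transpose_mat C \<in> carrier_mat K K" using C Ci by auto
    have s1: "act Dx Dt J (tau (dress \<phi> \<psi> \<Delta>i P)) \<Psi>
       = act Dx Dt J (tau Winv) (act Dx Dt J (tau P) (act Dx Dt J (tau W) \<Psi>))"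
      by (simp add: dress_def W_def Winv_def)
    have s2: "act Dx Dt J (tau W) \<Psi> = \<psi> * map_mat emb (transpose_mat Ci)"
      using T1 by (simp add: Ci'_def map_mat_transpose)
    have s3: "act Dx Dt J (tau P) (\<psi> * map_mat emb (transpose_mat Ci)) = \<psi> * map_mat emb (Y0 * transpose_mat Ci)"
      using act_right[OF wfo_tau[OF P] \<psi> Cit(1)] e hm[OF Y0 Cit(1)] \<psi> Y0 Cit by (simp add: assoc_dim)
    have s4: "act Dx Dt J (tau Winv) (\<psi> * map_mat emb (Y0 * transpose_mat Ci))
       = act Dx Dt J (tau Winv) \<psi> * map_mat emb (Y0 * transpose_mat Ci)"
      by (rule act_right[OF wfo_tau[OF wfWi] \<psi>]) (use Y0 Cit in auto)
    have s5: "act Dx Dt J (tau Winv) \<psi> * map_mat emb (Y0 * transpose_mat Ci)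
       = \<Psi> * map_mat emb (transpose_mat C * Y0 * transpose_mat Ci)"
      unfolding T2 C'_def using hm[OF Cit(2), of "Y0 * transpose_mat Ci" K] hm[OF Y0 Cit(1)] \<Psi>c Cit Y0
      by (simp add: assoc_dim map_mat_transpose)
    show ?thesis unfolding s1 s2 s3 s4 s5 ..
  qed
  have Lam: "\<Lambda> ^\<^sub>m Suc l \<in> carrier_mat K K" "\<Lambda>t ^\<^sub>m Suc l \<in> carrier_mat K K" using \<Lambda> \<Lambda>t by auto
  have Cit: "transpose_mat Ci \<in> carrier_mat K K" "transpose_mat C \<in> carrier_mat K K" using C Ci by auto
  have Cinvt: "transpose_mat C * transpose_mat Ci = 1\<^sub>m K" "transpose_mat Ci * transpose_mat C = 1\<^sub>m K"
    using C Ci C_inv by (simp_all add: transpose_mult_dim[symmetric])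
  define Y0 where "Y0 = - (c \<cdot>\<^sub>m \<Lambda> ^\<^sub>m Suc l)"
  have Y0c: "Y0 \<in> carrier_mat K K" using Lam by (simp add: Y0_def)
  have Lphi': "act Dx Dt J L \<phi> = \<phi> * map_mat emb Y0"
  proof -
    have "\<phi> * (emb c \<cdot>\<^sub>m map_mat emb (\<Lambda> ^\<^sub>m Suc l)) = emb c \<cdot>\<^sub>m (\<phi> * map_mat emb (\<Lambda> ^\<^sub>m Suc l))"
      by (rule mult_smult_distrib[OF \<phi>]) (use Lam in auto)
    moreover have "\<phi> * - (emb c \<cdot>\<^sub>m map_mat emb (\<Lambda> ^\<^sub>m Suc l)) = - (\<phi> * (emb c \<cdot>\<^sub>m map_mat emb (\<Lambda> ^\<^sub>m Suc l)))"
      by (rule uminus_mult_right_mat) (use \<phi> Lam in auto)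
    ultimately show ?thesis unfolding L_phi Y0_def neg_smult_map cmat_def by simp
  qed
  have dL: "act Dx Dt J (dress \<phi> \<psi> \<Delta>i L) \<Phi> = \<Phi> * map_mat emb (C * Y0 * Ci)"
    by (rule DP[OF wfL Lphi' Y0c])
  have dM: "act Dx Dt J (dress \<phi> \<psi> \<Delta>i M) \<Phi> = \<Phi> * map_mat emb (C * \<Lambda> * Ci)"
    by (rule DP[OF wfM _ \<Lambda>]) (simp add: M_phi cmat_def)
  have powM: "act Dx Dt J (opow (dress \<phi> \<psi> \<Delta>i M) (Suc l)) \<Phi> = \<Phi> * map_mat emb ((C * \<Lambda> * Ci) ^\<^sub>m Suc l)"
    by (rule pow_act[OF wfd[OF wfM] \<Phi>c _ dM]) (use C \<Lambda> Ci in auto)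
  have sim: "(C * \<Lambda> * Ci) ^\<^sub>m Suc l = C * \<Lambda> ^\<^sub>m Suc l * Ci"
    by (rule similar_mat_wit_pow_id) (use C \<Lambda> Ci C_inv in \<open>auto simp: similar_mat_wit_def Let_def\<close>)
  have CY: "C * Y0 * Ci = - (c \<cdot>\<^sub>m (C * \<Lambda> ^\<^sub>m Suc l * Ci))"
  proof -
    have "C * Y0 = - (c \<cdot>\<^sub>m (C * \<Lambda> ^\<^sub>m Suc l))"
      unfolding Y0_def using mult_smult_distrib[OF C Lam(1)] C Lam by (simp add: carrier_matD[OF C] carrier_matD[OF Lam(1)] carrier_matD[OF \<Lambda>])
    then have "C * Y0 * Ci = - (c \<cdot>\<^sub>m (C * \<Lambda> ^\<^sub>m Suc l)) * Ci" by simp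
    also have "\<dots> = - (c \<cdot>\<^sub>m (C * \<Lambda> ^\<^sub>m Suc l * Ci))"
      using mult_smult_assoc_mat[of "C * \<Lambda> ^\<^sub>m Suc l" K K Ci K c] C Lam Ci
      by (simp add: carrier_matD[OF C] carrier_matD[OF Lam(1)] carrier_matD[OF \<Lambda>] carrier_matD[OF Ci])
    finally show ?thesis .
  qed
  have W0c: "C * \<Lambda> ^\<^sub>m Suc l * Ci \<in> carrier_mat K K" using C Lam Ci by auto
  have eq3: "act Dx Dt J (dress \<phi> \<psi> \<Delta>i L) \<Phi>
           + act Dx Dt J (Scal (emb c) (opow (dress \<phi> \<psi> \<Delta>i M) (Suc l))) \<Phi> = 0\<^sub>m N K"
    unfolding act.simps(7) powM sim dL CY by (rule final_comb[OF \<Phi>c W0c])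
  define Y1 where "Y1 = - (c \<cdot>\<^sub>m \<Lambda>t ^\<^sub>m Suc l)"
  have Y1c: "Y1 \<in> carrier_mat K K" using Lam by (simp add: Y1_def)
  have Lpsi': "act Dx Dt J (tau L) \<psi> = \<psi> * map_mat emb Y1"
  proof -
    have "\<psi> * (emb c \<cdot>\<^sub>m map_mat emb (\<Lambda>t ^\<^sub>m Suc l)) = emb c \<cdot>\<^sub>m (\<psi> * map_mat emb (\<Lambda>t ^\<^sub>m Suc l))"
      by (rule mult_smult_distrib[OF \<psi>]) (use Lam in auto)
    moreover have "\<psi> * - (emb c \<cdot>\<^sub>m map_mat emb (\<Lambda>t ^\<^sub>m Suc l)) = - (\<psi> * (emb c \<cdot>\<^sub>m map_mat emb (\<Lambda>t ^\<^sub>m Suc l)))"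
      by (rule uminus_mult_right_mat) (use \<psi> Lam in auto)
    ultimately show ?thesis unfolding Lt_psi Y1_def neg_smult_map cmat_def by simp
  qed
  have dLt: "act Dx Dt J (tau (dress \<phi> \<psi> \<Delta>i L)) \<Psi> = \<Psi> * map_mat emb (transpose_mat C * Y1 * transpose_mat Ci)"
    by (rule DPt[OF wfL Lpsi' Y1c])
  have dMt: "act Dx Dt J (tau (dress \<phi> \<psi> \<Delta>i M)) \<Psi> = \<Psi> * map_mat emb (transpose_mat C * \<Lambda>t * transpose_mat Ci)"
    by (rule DPt[OF wfM _ \<Lambda>t]) (simp add: Mt_psi cmat_def)
  have powMt: "act Dx Dt J (opow (tau (dress \<phi> \<psi> \<Delta>i M)) (Suc l)) \<Psi>
      = \<Psi> * map_mat emb ((transpose_mat C * \<Lambda>t * transpose_mat Ci) ^\<^sub>m Suc l)"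
    by (rule pow_act[OF wfo_tau[OF wfd[OF wfM]] \<Psi>c _ dMt]) (use Cit \<Lambda>t in auto)
  have simt: "(transpose_mat C * \<Lambda>t * transpose_mat Ci) ^\<^sub>m Suc l = transpose_mat C * \<Lambda>t ^\<^sub>m Suc l * transpose_mat Ci"
    by (rule similar_mat_wit_pow_id) (use Cit \<Lambda>t Cinvt in \<open>auto simp: similar_mat_wit_def Let_def\<close>)
  have CY1: "transpose_mat C * Y1 * transpose_mat Ci = - (c \<cdot>\<^sub>m (transpose_mat C * \<Lambda>t ^\<^sub>m Suc l * transpose_mat Ci))"
  proof -
    have "transpose_mat C * Y1 = - (c \<cdot>\<^sub>m (transpose_mat C * \<Lambda>t ^\<^sub>m Suc l))"
      unfolding Y1_def using mult_smult_distrib[OF Cit(2) Lam(2)] Cit Lam by (simp add: carrier_matD[OF Cit(2)] carrier_matD[OF Lam(2)] carrier_matD[OF \<Lambda>t])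
    then have "transpose_mat C * Y1 * transpose_mat Ci = - (c \<cdot>\<^sub>m (transpose_mat C * \<Lambda>t ^\<^sub>m Suc l)) * transpose_mat Ci" by simp
    also have "\<dots> = - (c \<cdot>\<^sub>m (transpose_mat C * \<Lambda>t ^\<^sub>m Suc l * transpose_mat Ci))"
      using mult_smult_assoc_mat[of "transpose_mat C * \<Lambda>t ^\<^sub>m Suc l" K K "transpose_mat Ci" K c] Cit Lam
      by (simp add: carrier_matD[OF Cit(1)] carrier_matD[OF Cit(2)] carrier_matD[OF Lam(2)] carrier_matD[OF \<Lambda>t])
    finally show ?thesis .
  qed
  have W1c: "transpose_mat C * \<Lambda>t ^\<^sub>m Suc l * transpose_mat Ci \<in> carrier_mat K K" using Cit Lam by auto
  have eq4: "act Dx Dt J (tau (dress \<phi> \<psi> \<Delta>i L)) \<Psi>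
           + act Dx Dt J (Scal (emb c) (opow (tau (dress \<phi> \<psi> \<Delta>i M)) (Suc l))) \<Psi> = 0\<^sub>m N K"
    unfolding act.simps(7) powMt simt dLt CY1 by (rule final_comb[OF \<Psi>c W1c])
  show ?thesis using claim1 claim2 eq3 eq4 by blast
qed

end
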